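(* Let $h:\mathcal S\to\mathbb R$ be bounded and $\lambda\in[0,1]$, defining the reshaped MDP $\widetilde{\mathcal M}$. For every policy $\pi$, every initial state distribution $d_0$ and every bounded $V:\mathcal S\to\mathbb R$, $$V(d_0)-V^\pi(d_0)=\frac{\gamma(1-\lambda)}{1-\gamma}\,\mathbb E_{(s,a)\sim d^\pi}\,\mathbb E_{s'\sim P(\cdot|s,a)}\big[h(s')-V(s')\big]+\lambda\big(V(d_0)-\widetilde V^\pi(d_0)\big)+\frac{1-\lambda}{1-\gamma}\big(V(d^\pi)-\widetilde V^\pi(d^\pi)\big).$$
   Context: Let $\mathcal M=(\mathcal S,\mathcal A,P,r,\gamma)$ be a discounted MDP with transition kernel $P(\cdot|s,a)$, reward $r:\mathcal S\times\mathcal A\to[0,1]$ and discount $\gamma\in[0,1)$. A policy $\pi$ is a Markov kernel from $\mathcal S$ to distributions on $\mathcal A$; $\rho^\pi(s)$ (resp. $\rho^\pi(d_0)$) is the trajectory law with $s_0=s$ (resp. $s_0\sim d_0$), $a_t\sim\pi(\cdot|s_t)$, $s_{t+1}\sim P(\cdot|s_t,a_t)$. $V^\pi(s)=\mathbb E_{\rho^\pi(s)}[\sum_t\gamma^tr(s_t,a_t)]$. For $V:\mathcal S\to\mathbb R$ and a distribution $d$, $V(d)=\mathbb E_{s\sim d}[V(s)]$. $d_t^\pi$ is the law of $s_t$ under $\rho^\pi(d_0)$, $d^\pi=(1-\gamma)\sum_t\gamma^td_t^\pi$, $d^\pi(s,a)=d^\pi(s)\pi(a|s)$. Reshaped MDP: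 $\widetilde{\mathcal M}=(\mathcal S,\mathcal A,P,\widetilde r,\lambda\gamma)$ with $\widetilde r(s,a)=r(s,a)+(1-\lambda)\gamma\,\mathbb E_{s'\sim P(\cdot|s,a)}[h(s')]$, and $\widetilde V^\pi(s)=\mathbb E_{\rho^\pi(s)}[\sum_t(\lambda\gamma)^t\widetilde r(s_t,a_t)]$. *)

theory Defs
  imports "HOL-Probability.Probability"
begin

text \<open>The transition kernel is P :: 's \<times> 'a \<Rightarrow> 's measure (P(.|s,a) = P (s,a)),
  a policy is a Markov kernel pol :: 's \<Rightarrow> 'a measure.\<close>

definition mdp_step :: "('s \<times> 'a \<Rightarrow> 's measure) \<Rightarrow> ('s \<Rightarrow> 'a measure) \<Rightarrow> 's measure \<Rightarrow> 's measure" where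
  "mdp_step P pol d = d \<bind> (\<lambda>s. pol s \<bind> (\<lambda>a. P (s, a)))"

definition state_dist :: "('s \<times> 'a \<Rightarrow> 's measure) \<Rightarrow> ('s \<Rightarrow> 'a measure) \<Rightarrow> 's measure \<Rightarrow> nat \<Rightarrow> 's measure" where
  "state_dist P pol d t = (mdp_step P pol ^^ t) d"

definition sa_dist :: "'s measure \<Rightarrow> 'a measure \<Rightarrow> ('s \<Rightarrow> 'a measure) \<Rightarrow> 's measure \<Rightarrow> ('s \<times> 'a) measure" where
  "sa_dist S A pol d = d \<bind> (\<lambda>s. pol s \<bind> (\<lambda>a. return (S \<Otimes>\<^sub>M A) (s, a)))"

text \<open>Discounted value with reward R and discount g, started at s:
  E[sum_t g^t R(s_t,a_t)] = sum_t g^t E[R(s_t,a_t)], with (s_t,a_t) having law sa_dist of d_t.\<close>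
definition disc_value :: "'s measure \<Rightarrow> 'a measure \<Rightarrow> ('s \<times> 'a \<Rightarrow> 's measure) \<Rightarrow> ('s \<Rightarrow> 'a measure)
    \<Rightarrow> ('s \<Rightarrow> 'a \<Rightarrow> real) \<Rightarrow> real \<Rightarrow> 's \<Rightarrow> real" where
  "disc_value S A P pol R g s =
     (\<Sum>t. g ^ t * (\<integral>sa. R (fst sa) (snd sa) \<partial>(sa_dist S A pol (state_dist P pol (return S s) t))))"

definition eval_dist :: "'s measure \<Rightarrow> ('s \<Rightarrow> real) \<Rightarrow> real" where
  "eval_dist d V = (\<integral>s. V s \<partial>d)"

definition occupancy :: "'s measure \<Rightarrow> ('s \<times> 'a \<Rightarrow> 's measure) \<Rightarrow> ('s \<Rightarrow> 'a measure) \<Rightarrow> real \<Rightarrow> 's measure \<Rightarrow> 's measure" where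
  "occupancy S P pol g d0 = measure_of (space S) (sets S)
     (\<lambda>X. \<Sum>t. ennreal ((1 - g) * g ^ t) * emeasure (state_dist P pol d0 t) X)"

definition reshaped_reward :: "('s \<times> 'a \<Rightarrow> 's measure) \<Rightarrow> ('s \<Rightarrow> 'a \<Rightarrow> real) \<Rightarrow> real \<Rightarrow> real
    \<Rightarrow> ('s \<Rightarrow> real) \<Rightarrow> 's \<Rightarrow> 'a \<Rightarrow> real" where
  "reshaped_reward P r g lam h s a = r s a + (1 - lam) * g * (\<integral>s'. h s' \<partial>(P (s, a)))"

end

theory Submission
  imports Defs
begin


lemma pa_D: "\<mu> \<in> space (prob_algebra X) \<Longrightarrow> sets \<mu> = sets X \<and> prob_space \<mu>"
  by (simp add: space_prob_algebra)

lemma bnd_integrable: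
  fixes f :: "'x \<Rightarrow> real"
  assumes "\<nu> \<in> space (prob_algebra X)" "f \<in> borel_measurable X" "\<And>y. y \<in> space X \<Longrightarrow> \<bar>f y\<bar> \<le> B"
  shows "integrable \<nu> f" "\<bar>\<integral>y. f y \<partial>\<nu>\<bar> \<le> B"
proof -
  have s: "sets \<nu> = sets X" and p: "prob_space \<nu>" using pa_D[OF assms(1)] by auto
  have sp: "space \<nu> = space X" using s by (rule sets_eq_imp_space_eq)
  interpret prob_space \<nu> by (rule p)
  have m: "f \<in> borel_measurable \<nu>" using assms(2) s by (simp cong: measurable_cong_sets)
  show i: "integrable \<nu> f"
    by (rule integrable_const_bound[where B=B]) (use assms(3) sp m in auto)
  have "\<bar>\<integral>y. f y \<partial>\<nu>\<bar> \<le> (\<integral>y. \<bar>f y\<bar> \<partial>\<nu>)" by (rule integral_abs_bound)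
  also have "\<dots> \<le> B"
    by (rule integral_le_const) (use assms(3) sp i in auto)
  finally show "\<bar>\<integral>y. f y \<partial>\<nu>\<bar> \<le> B" .
qed

lemma int_bind:
  fixes f :: "'y \<Rightarrow> real"
  assumes N: "N \<in> X \<rightarrow>\<^sub>M prob_algebra Y" and mu: "\<mu> \<in> space (prob_algebra X)"
    and f: "f \<in> borel_measurable Y" and B: "\<And>y. y \<in> space Y \<Longrightarrow> \<bar>f y\<bar> \<le> B"
  shows "(\<integral>y. f y \<partial>(\<mu> \<bind> N)) = (\<integral>x. (\<integral>y. f y \<partial>N x) \<partial>\<mu>)"
proof -
  have s: "sets \<mu> = sets X" and p: "prob_space \<mu>" using pa_D[OF mu] by auto
  have N': "N \<in> measurable \<mu> (subprob_algebra Y)"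
    using measurable_prob_algebraD[OF N] s by (simp cong: measurable_cong_sets)
  have ae: "AE x in \<mu>. emeasure (N x) (space (N x)) \<le> ennreal 1"
  proof (rule AE_I2)
    fix x assume "x \<in> space \<mu>"
    then have "x \<in> space X" using sets_eq_imp_space_eq[OF s] by simp
    then have "N x \<in> space (prob_algebra Y)" by (rule measurable_space[OF N])
    then have "prob_space (N x)" by (simp add: space_prob_algebra)
    then show "emeasure (N x) (space (N x)) \<le> ennreal 1" by (simp add: prob_space.emeasure_space_1)
  qed
  show ?thesis
    using integral_bind[OF f B N' prob_space.finite_measure[OF p] ae] by simp
qed

lemma ser_bnd:
  fixes a :: "nat \<Rightarrow> real"
  assumes a: "\<And>t. \<bar>a t\<bar> \<le> \<bar>c\<bar> ^ t * B" and c: "\<bar>c\<bar> < 1"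
  shows "summable a" "summable (\<lambda>t. \<bar>a t\<bar>)" "\<bar>suminf a\<bar> \<le> B / (1 - \<bar>c\<bar>)"
proof -
  have g: "summable (\<lambda>t. \<bar>c\<bar> ^ t * B)" using c by (intro summable_mult2 summable_geometric) simp
  show sa: "summable (\<lambda>t. \<bar>a t\<bar>)" by (rule summable_comparison_test[OF _ g]) (use a in auto)
  then show "summable a" by (rule summable_rabs_cancel)
  have "\<bar>suminf a\<bar> \<le> (\<Sum>t. \<bar>a t\<bar>)" by (rule summable_rabs[OF sa])
  also have "\<dots> \<le> (\<Sum>t. \<bar>c\<bar> ^ t * B)" by (rule suminf_le[OF _ sa g]) (use a in auto)
  also have "\<dots> = B / (1 - \<bar>c\<bar>)"
  proof -
    have "(\<Sum>t. \<bar>c\<bar> ^ t * B) = (\<Sum>t. \<bar>c\<bar> ^ t) * B"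
      by (rule suminf_mult2[symmetric]) (rule summable_geometric, use c in simp)
    also have "\<dots> = B / (1 - \<bar>c\<bar>)" using c by (simp add: suminf_geometric)
    finally show ?thesis .
  qed
  finally show "\<bar>suminf a\<bar> \<le> B / (1 - \<bar>c\<bar>)" .
qed

context
  fixes S :: "'s measure" and A :: "'a measure"
    and P :: "'s \<times> 'a \<Rightarrow> 's measure" and pol :: "'s \<Rightarrow> 'a measure"
  assumes P_kernel: "P \<in> S \<Otimes>\<^sub>M A \<rightarrow>\<^sub>M prob_algebra S"
    and pi_kernel: "pol \<in> S \<rightarrow>\<^sub>M prob_algebra A"
begin

lemma K_meas: "(\<lambda>s. pol s \<bind> (\<lambda>a. P (s, a))) \<in> S \<rightarrow>\<^sub>M prob_algebra S"
  by (rule measurable_bind_prob_space2[OF pi_kernel]) (simp add: P_kernel)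

lemma Q_meas: "(\<lambda>s. pol s \<bind> (\<lambda>a. return (S \<Otimes>\<^sub>M A) (s, a))) \<in> S \<rightarrow>\<^sub>M prob_algebra (S \<Otimes>\<^sub>M A)"
  by (rule measurable_bind_prob_space2[OF pi_kernel]) (simp add: measurable_return_prob_space)

lemma step_prob: "\<mu> \<in> space (prob_algebra S) \<Longrightarrow> mdp_step P pol \<mu> \<in> space (prob_algebra S)"
  unfolding mdp_step_def
  using measurable_bind_prob_space[OF measurable_const K_meas, of \<mu> "count_space UNIV"]
  by (auto dest: measurable_space)

lemma sd_prob: "\<mu> \<in> space (prob_algebra S) \<Longrightarrow> state_dist P pol \<mu> t \<in> space (prob_algebra S)"
  by (induction t) (auto simp: state_dist_def step_prob)

lemma sd_Suc: "state_dist P pol \<mu> (Suc t) = state_dist P pol \<mu> t \<bind> (\<lambda>s. pol s \<bind> (\<lambda>a. P (s, a)))"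
  by (simp add: state_dist_def mdp_step_def)

lemma sd_meas: "(\<lambda>s. state_dist P pol (return S s) t) \<in> S \<rightarrow>\<^sub>M prob_algebra S"
proof (induction t)
  case 0 then show ?case by (simp add: state_dist_def measurable_return_prob_space)
next
  case (Suc t) then show ?case
    unfolding sd_Suc by (rule measurable_bind_prob_space[OF _ K_meas])
qed

lemma sd_bind: "\<mu> \<in> space (prob_algebra S) \<Longrightarrow>
   state_dist P pol \<mu> t = \<mu> \<bind> (\<lambda>s. state_dist P pol (return S s) t)"
proof (induction t)
  case 0 then show ?case by (simp add: state_dist_def bind_return'' space_prob_algebra)
next
  case (Suc t)
  have "state_dist P pol \<mu> (Suc t) = (\<mu> \<bind> (\<lambda>s. state_dist P pol (return S s) t)) \<bind> (\<lambda>s. pol s \<bind> (\<lambda>a. P (s, a)))"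
    using Suc by (simp add: sd_Suc)
  also have "\<dots> = \<mu> \<bind> (\<lambda>s. state_dist P pol (return S s) t \<bind> (\<lambda>s. pol s \<bind> (\<lambda>a. P (s, a))))"
    apply (rule bind_assoc[where N=S and R=S])
    using sd_meas[of t] K_meas Suc.prems
    by (auto intro!: measurable_prob_algebraD simp: space_prob_algebra cong: measurable_cong_sets)
  finally show ?case by (simp add: sd_Suc)
qed

lemma sd_add: "state_dist P pol (state_dist P pol \<mu> t) k = state_dist P pol \<mu> (t + k)"
  by (simp add: state_dist_def funpow_add add.commute)


lemma P_int_meas:
  fixes f :: "'s \<Rightarrow> real"
  assumes "f \<in> borel_measurable S"
  shows "(\<lambda>sa. \<integral>y. f y \<partial>P sa) \<in> borel_measurable (S \<Otimes>\<^sub>M A)"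
  by (rule measurable_compose[OF measurable_prob_algebraD[OF P_kernel] integral_measurable_subprob_algebra[OF assms]])

lemma P_int_bnd:
  fixes f :: "'s \<Rightarrow> real"
  assumes "f \<in> borel_measurable S" "\<And>y. y \<in> space S \<Longrightarrow> \<bar>f y\<bar> \<le> B" "sa \<in> space (S \<Otimes>\<^sub>M A)"
  shows "\<bar>\<integral>y. f y \<partial>P sa\<bar> \<le> B"
  by (rule bnd_integrable(2)[OF measurable_space[OF P_kernel assms(3)] assms(1,2)])

lemma K_int:
  fixes f :: "'s \<Rightarrow> real"
  assumes f: "f \<in> borel_measurable S" and B: "\<And>y. y \<in> space S \<Longrightarrow> \<bar>f y\<bar> \<le> B" and s: "s \<in> space S"
  shows "(\<integral>y. f y \<partial>(pol s \<bind> (\<lambda>a. P (s, a)))) = (\<integral>a. (\<integral>y. f y \<partial>P (s, a)) \<partial>pol s)"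
  by (rule int_bind[OF measurable_Pair2[OF P_kernel s] measurable_space[OF pi_kernel s] f B])

lemma Q_int:
  fixes f :: "'s \<times> 'a \<Rightarrow> real"
  assumes f: "f \<in> borel_measurable (S \<Otimes>\<^sub>M A)" and B: "\<And>y. y \<in> space (S \<Otimes>\<^sub>M A) \<Longrightarrow> \<bar>f y\<bar> \<le> B" and s: "s \<in> space S"
  shows "(\<integral>y. f y \<partial>(pol s \<bind> (\<lambda>a. return (S \<Otimes>\<^sub>M A) (s, a)))) = (\<integral>a. f (s, a) \<partial>pol s)"
proof -
  have N: "(\<lambda>a. return (S \<Otimes>\<^sub>M A) (s, a)) \<in> A \<rightarrow>\<^sub>M prob_algebra (S \<Otimes>\<^sub>M A)"
    by (rule measurable_compose[OF _ measurable_return_prob_space]) (use s in simp)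
  have mu: "pol s \<in> space (prob_algebra A)" by (rule measurable_space[OF pi_kernel s])
  have sp: "space (pol s) = space A" using pa_D[OF mu] sets_eq_imp_space_eq by blast
  have "(\<integral>y. f y \<partial>(pol s \<bind> (\<lambda>a. return (S \<Otimes>\<^sub>M A) (s, a)))) = (\<integral>a. (\<integral>y. f y \<partial>return (S \<Otimes>\<^sub>M A) (s, a)) \<partial>pol s)"
    by (rule int_bind[OF N mu f B])
  also have "\<dots> = (\<integral>a. f (s, a) \<partial>pol s)"
    by (rule Bochner_Integration.integral_cong[OF refl]) (use s sp f in \<open>auto simp: space_pair_measure integral_return\<close>)
  finally show ?thesis .
qed


lemma sa_meas: "(\<lambda>s. sa_dist S A pol (state_dist P pol (return S s) t)) \<in> S \<rightarrow>\<^sub>M prob_algebra (S \<Otimes>\<^sub>M A)"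
  unfolding sa_dist_def by (rule measurable_bind_prob_space[OF sd_meas Q_meas])

lemma sa_prob: "\<nu> \<in> space (prob_algebra S) \<Longrightarrow> sa_dist S A pol \<nu> \<in> space (prob_algebra (S \<Otimes>\<^sub>M A))"
  unfolding sa_dist_def
  using measurable_bind_prob_space[OF measurable_const Q_meas, of \<nu> "count_space UNIV"]
  by (auto dest: measurable_space)

lemma sa_sd_bind: "\<mu> \<in> space (prob_algebra S) \<Longrightarrow>
   sa_dist S A pol (state_dist P pol \<mu> t) = \<mu> \<bind> (\<lambda>s. sa_dist S A pol (state_dist P pol (return S s) t))"
  unfolding sa_dist_def sd_bind[of \<mu> t]
  apply (rule bind_assoc[where N=S and R="S \<Otimes>\<^sub>M A"])
  using sd_meas[of t] Q_meas
  by (auto intro!: measurable_prob_algebraD simp: space_prob_algebra cong: measurable_cong_sets)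

lemma sa_P:
  fixes f :: "'s \<Rightarrow> real"
  assumes nu: "\<nu> \<in> space (prob_algebra S)" and f: "f \<in> borel_measurable S" and B: "\<And>y. y \<in> space S \<Longrightarrow> \<bar>f y\<bar> \<le> B"
  shows "(\<integral>sa. (\<integral>y. f y \<partial>P sa) \<partial>sa_dist S A pol \<nu>) = (\<integral>y. f y \<partial>mdp_step P pol \<nu>)"
proof -
  have sp: "space \<nu> = space S" using pa_D[OF nu] sets_eq_imp_space_eq by blast
  have "(\<integral>sa. (\<integral>y. f y \<partial>P sa) \<partial>sa_dist S A pol \<nu>) =
     (\<integral>s. (\<integral>sa. (\<integral>y. f y \<partial>P sa) \<partial>(pol s \<bind> (\<lambda>a. return (S \<Otimes>\<^sub>M A) (s, a)))) \<partial>\<nu>)"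
    unfolding sa_dist_def by (rule int_bind[OF Q_meas nu P_int_meas[OF f] P_int_bnd[OF f B]])
  also have "\<dots> = (\<integral>s. (\<integral>a. (\<integral>y. f y \<partial>P (s, a)) \<partial>pol s) \<partial>\<nu>)"
    by (rule Bochner_Integration.integral_cong[OF refl])
       (use sp in \<open>auto intro: Q_int[OF P_int_meas[OF f] P_int_bnd[OF f B]]\<close>)
  also have "\<dots> = (\<integral>s. (\<integral>y. f y \<partial>(pol s \<bind> (\<lambda>a. P (s, a)))) \<partial>\<nu>)"
    by (rule Bochner_Integration.integral_cong[OF refl])
       (use sp in \<open>auto simp: K_int[OF f B]\<close>)
  also have "\<dots> = (\<integral>y. f y \<partial>mdp_step P pol \<nu>)"
    unfolding mdp_step_def by (rule int_bind[OF K_meas nu f B, symmetric])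
  finally show ?thesis .
qed

context
  fixes R :: "'s \<Rightarrow> 'a \<Rightarrow> real" and c B :: real
  assumes R_meas: "(\<lambda>sa. R (fst sa) (snd sa)) \<in> borel_measurable (S \<Otimes>\<^sub>M A)"
    and R_bnd: "\<And>sa. sa \<in> space (S \<Otimes>\<^sub>M A) \<Longrightarrow> \<bar>R (fst sa) (snd sa)\<bar> \<le> B"
    and c: "\<bar>c\<bar> < 1"
begin

lemma term_meas: "(\<lambda>s. \<integral>sa. R (fst sa) (snd sa) \<partial>sa_dist S A pol (state_dist P pol (return S s) t)) \<in> borel_measurable S"
  by (rule measurable_compose[OF measurable_prob_algebraD[OF sa_meas] integral_measurable_subprob_algebra[OF R_meas]])

lemma term_bnd: "s \<in> space S \<Longrightarrow> \<bar>\<integral>sa. R (fst sa) (snd sa) \<partial>sa_dist S A pol (state_dist P pol (return S s) t)\<bar> \<le> B"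
  by (rule bnd_integrable(2)[OF measurable_space[OF sa_meas] R_meas R_bnd])

lemma term_bnd2: "s \<in> space S \<Longrightarrow> \<bar>c ^ t * (\<integral>sa. R (fst sa) (snd sa) \<partial>sa_dist S A pol (state_dist P pol (return S s) t))\<bar> \<le> \<bar>c\<bar> ^ t * B"
  by (simp add: abs_mult power_abs mult_left_mono term_bnd)

lemma disc_meas: "disc_value S A P pol R c \<in> borel_measurable S"
  unfolding disc_value_def
  by (intro borel_measurable_suminf borel_measurable_times measurable_const term_meas) simp_all

lemma disc_bnd: "s \<in> space S \<Longrightarrow> \<bar>disc_value S A P pol R c s\<bar> \<le> B / (1 - \<bar>c\<bar>)"
  unfolding disc_value_def by (rule ser_bnd(3)[OF term_bnd2 c])

lemma disc_int:
  assumes mu: "\<mu> \<in> space (prob_algebra S)"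
  shows "(\<integral>s. disc_value S A P pol R c s \<partial>\<mu>) =
    (\<Sum>t. c ^ t * (\<integral>sa. R (fst sa) (snd sa) \<partial>sa_dist S A pol (state_dist P pol \<mu> t)))"
proof -
  have sp: "space \<mu> = space S" using pa_D[OF mu] sets_eq_imp_space_eq by blast
  let ?f = "\<lambda>t s. c ^ t * (\<integral>sa. R (fst sa) (snd sa) \<partial>sa_dist S A pol (state_dist P pol (return S s) t))"
  have fm: "?f t \<in> borel_measurable S" for t
    by (intro borel_measurable_times measurable_const term_meas) simp_all
  have int: "integrable \<mu> (?f t)" for t
    by (rule bnd_integrable(1)[OF mu fm term_bnd2])
  have ib: "(\<integral>s. norm (?f t s) \<partial>\<mu>) \<le> \<bar>c\<bar> ^ t * B" for t
  proof -
    have "(\<integral>s. norm (?f t s) \<partial>\<mu>) = \<bar>\<integral>s. norm (?f t s) \<partial>\<mu>\<bar>" by simp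
    also have "\<dots> \<le> \<bar>c\<bar> ^ t * B"
      by (rule bnd_integrable(2)[OF mu]) (use fm term_bnd2 in auto)
    finally show ?thesis .
  qed
  have sum1: "AE s in \<mu>. summable (\<lambda>t. norm (?f t s))"
    by (rule AE_I2) (use ser_bnd(2)[OF term_bnd2 c] sp in auto)
  have sum2: "summable (\<lambda>t. \<integral>s. norm (?f t s) \<partial>\<mu>)"
    by (rule ser_bnd(1)[where c=c and B=B]) (use ib c in auto)
  have "(\<integral>s. disc_value S A P pol R c s \<partial>\<mu>) = (\<Sum>t. \<integral>s. ?f t s \<partial>\<mu>)"
    unfolding disc_value_def by (rule integral_suminf[OF int sum1 sum2])
  also have "\<dots> = (\<Sum>t. c ^ t * (\<integral>sa. R (fst sa) (snd sa) \<partial>sa_dist S A pol (state_dist P pol \<mu> t)))"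
  proof (rule suminf_cong)
    fix t
    have "(\<integral>s. ?f t s \<partial>\<mu>) = c ^ t * (\<integral>s. (\<integral>sa. R (fst sa) (snd sa) \<partial>sa_dist S A pol (state_dist P pol (return S s) t)) \<partial>\<mu>)"
      by simp
    also have "\<dots> = c ^ t * (\<integral>sa. R (fst sa) (snd sa) \<partial>sa_dist S A pol (state_dist P pol \<mu> t))"
      unfolding sa_sd_bind[OF mu, of t] by (simp add: int_bind[OF sa_meas mu R_meas R_bnd])
    finally show "(\<integral>s. ?f t s \<partial>\<mu>) = \<dots>" .
  qed
  finally show ?thesis .
qed

end

end

lemma geom_int:
  fixes \<phi> :: "nat \<Rightarrow> real"
  assumes g: "0 \<le> g" "g < 1" and B: "\<And>t. \<bar>\<phi> t\<bar> \<le> B"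
  shows "(\<integral>t. \<phi> t \<partial>measure_pmf (geometric_pmf (1 - g))) = (\<Sum>t. (1 - g) * g ^ t * \<phi> t)"
proof -
  have pm: "pmf (geometric_pmf (1 - g)) t = (1 - g) * g ^ t" for t using g by simp
  have "(\<integral>t. \<phi> t \<partial>measure_pmf (geometric_pmf (1 - g))) =
      (\<integral>t. pmf (geometric_pmf (1 - g)) t *\<^sub>R \<phi> t \<partial>count_space UNIV)"
    unfolding measure_pmf_eq_density by (rule integral_density) auto
  also have "\<dots> = (\<integral>t. (1 - g) * g ^ t * \<phi> t \<partial>count_space UNIV)" by (simp add: pm)
  also have "\<dots> = (\<Sum>t. (1 - g) * g ^ t * \<phi> t)"
  proof (rule integral_count_space_nat)
    have "\<bar>(1 - g) * g ^ t * \<phi> t\<bar> \<le> \<bar>g\<bar> ^ t * ((1 - g) * B)" for t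
      using g B[of t] by (simp add: abs_mult mult_left_mono)
    from ser_bnd(2)[OF this] g show "integrable (count_space UNIV) (\<lambda>t. (1 - g) * g ^ t * \<phi> t)"
      by (simp add: integrable_count_space_nat_iff)
  qed
  finally show ?thesis .
qed

context
  fixes S :: "'s measure" and A :: "'a measure"
    and P :: "'s \<times> 'a \<Rightarrow> 's measure" and pol :: "'s \<Rightarrow> 'a measure"
    and g :: real and d0 :: "'s measure"
  assumes P_kernel: "P \<in> S \<Otimes>\<^sub>M A \<rightarrow>\<^sub>M prob_algebra S"
    and pi_kernel: "pol \<in> S \<rightarrow>\<^sub>M prob_algebra A"
    and g: "0 \<le> g" "g < 1" and d0: "d0 \<in> space (prob_algebra S)"
begin

abbreviation "geo \<equiv> measure_pmf (geometric_pmf (1 - g))"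

lemma D_meas: "(\<lambda>t. state_dist P pol d0 t) \<in> geo \<rightarrow>\<^sub>M prob_algebra S"
  using sd_prob[OF P_kernel pi_kernel d0] by simp

lemma occ_eq: "occupancy S P pol g d0 = geo \<bind> (\<lambda>t. state_dist P pol d0 t)"
proof -
  let ?B = "geo \<bind> (\<lambda>t. state_dist P pol d0 t)"
  have sB: "sets ?B = sets S"
    by (rule sets_bind) (use pa_D[OF sd_prob[OF P_kernel pi_kernel d0]] in auto)
  have spB: "space ?B = space S" using sB by (rule sets_eq_imp_space_eq)
  have em: "emeasure ?B X = (\<Sum>t. ennreal ((1 - g) * g ^ t) * emeasure (state_dist P pol d0 t) X)"
    if X: "X \<in> sets S" for X
  proof -
    have "emeasure ?B X = (\<integral>\<^sup>+t. emeasure (state_dist P pol d0 t) X \<partial>geo)"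
      by (rule emeasure_bind[OF _ measurable_prob_algebraD[OF D_meas] X]) simp
    also have "\<dots> = (\<integral>\<^sup>+t. ennreal (pmf (geometric_pmf (1 - g)) t) * emeasure (state_dist P pol d0 t) X \<partial>count_space UNIV)"
      by (rule nn_integral_measure_pmf)
    also have "\<dots> = (\<Sum>t. ennreal ((1 - g) * g ^ t) * emeasure (state_dist P pol d0 t) X)"
      using g by (simp add: nn_integral_count_space_nat mult.commute)
    finally show ?thesis .
  qed
  have "occupancy S P pol g d0 = measure_of (space S) (sets S) (emeasure ?B)"
    unfolding occupancy_def
    by (rule measure_of_eq[OF sets.space_closed]) (simp add: sets.sigma_sets_eq em)
  also have "\<dots> = ?B"
    using measure_of_of_measure[of ?B] by (simp add: sB spB)
  finally show ?thesis .
qed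

lemma occ_prob: "occupancy S P pol g d0 \<in> space (prob_algebra S)"
proof -
  have sB: "sets (geo \<bind> (\<lambda>t. state_dist P pol d0 t)) = sets S"
    by (rule sets_bind) (use pa_D[OF sd_prob[OF P_kernel pi_kernel d0]] in auto)
  have "prob_space (geo \<bind> (\<lambda>t. state_dist P pol d0 t))"
    by (rule prob_space.prob_space_bind[OF measure_pmf.prob_space_axioms _ measurable_prob_algebraD[OF D_meas]])
       (use pa_D[OF sd_prob[OF P_kernel pi_kernel d0]] in auto)
  then show ?thesis using sB by (simp add: occ_eq space_prob_algebra)
qed

lemma occ_int:
  fixes f :: "'s \<Rightarrow> real"
  assumes f: "f \<in> borel_measurable S" and B: "\<And>y. y \<in> space S \<Longrightarrow> \<bar>f y\<bar> \<le> B"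
  shows "(\<integral>y. f y \<partial>occupancy S P pol g d0) = (\<Sum>t. (1 - g) * g ^ t * (\<integral>y. f y \<partial>state_dist P pol d0 t))"
proof -
  have gp: "geo \<in> space (prob_algebra geo)"
    by (simp add: space_prob_algebra measure_pmf.prob_space_axioms)
  have "(\<integral>y. f y \<partial>occupancy S P pol g d0) = (\<integral>t. (\<integral>y. f y \<partial>state_dist P pol d0 t) \<partial>geo)"
    unfolding occ_eq by (rule int_bind[OF D_meas gp f B])
  also have "\<dots> = (\<Sum>t. (1 - g) * g ^ t * (\<integral>y. f y \<partial>state_dist P pol d0 t))"
    by (rule geom_int[OF g bnd_integrable(2)[OF sd_prob[OF P_kernel pi_kernel d0] f B]])
  finally show ?thesis .
qed


lemma occ_P:
  fixes f :: "'s \<Rightarrow> real"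
  assumes f: "f \<in> borel_measurable S" and B: "\<And>y. y \<in> space S \<Longrightarrow> \<bar>f y\<bar> \<le> B"
  shows "(\<integral>sa. (\<integral>y. f y \<partial>P sa) \<partial>sa_dist S A pol (occupancy S P pol g d0))
     = (\<Sum>t. (1 - g) * g ^ t * (\<integral>y. f y \<partial>state_dist P pol d0 (Suc t)))"
proof -
  let ?T = "\<lambda>s. \<integral>y. f y \<partial>(pol s \<bind> (\<lambda>a. P (s, a)))"
  have Tm: "?T \<in> borel_measurable S"
    by (rule measurable_compose[OF measurable_prob_algebraD[OF K_meas[OF P_kernel pi_kernel]] integral_measurable_subprob_algebra[OF f]])
  have Tb: "\<bar>?T s\<bar> \<le> B" if "s \<in> space S" for s
    by (rule bnd_integrable(2)[OF measurable_space[OF K_meas[OF P_kernel pi_kernel] that] f B])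
  have "(\<integral>sa. (\<integral>y. f y \<partial>P sa) \<partial>sa_dist S A pol (occupancy S P pol g d0))
      = (\<integral>y. f y \<partial>mdp_step P pol (occupancy S P pol g d0))"
    by (rule sa_P[OF P_kernel pi_kernel occ_prob f B])
  also have "\<dots> = (\<integral>s. ?T s \<partial>occupancy S P pol g d0)"
    unfolding mdp_step_def by (rule int_bind[OF K_meas[OF P_kernel pi_kernel] occ_prob f B])
  also have "\<dots> = (\<Sum>t. (1 - g) * g ^ t * (\<integral>s. ?T s \<partial>state_dist P pol d0 t))"
    by (rule occ_int[OF Tm Tb])
  also have "\<dots> = (\<Sum>t. (1 - g) * g ^ t * (\<integral>y. f y \<partial>state_dist P pol d0 (Suc t)))"
    by (rule suminf_cong) (simp add: sd_Suc[OF P_kernel pi_kernel] int_bind[OF K_meas[OF P_kernel pi_kernel] sd_prob[OF P_kernel pi_kernel d0] f B])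
  finally show ?thesis .
qed

end



lemma gsum: fixes z :: "nat \<Rightarrow> real" assumes "\<And>t. \<bar>z t\<bar> \<le> M" "0 \<le> g" "g < 1"
  shows "summable (\<lambda>t. g ^ t * z t)"
proof (rule summable_comparison_test[OF _ summable_mult2[OF summable_geometric, of g M]])
  show "\<exists>N. \<forall>n\<ge>N. norm (g ^ n * z n) \<le> g ^ n * M"
    using assms by (auto simp: abs_mult intro!: mult_left_mono)
qed (use assms in simp)

lemma alg:
  fixes v y x w :: "nat \<Rightarrow> real" and g lam M :: real
  assumes g: "0 \<le> g" "g < 1"
    and bv: "\<And>t. \<bar>v t\<bar> \<le> M" and hy: "\<And>t. \<bar>y t\<bar> \<le> M" and bx: "\<And>t. \<bar>x t\<bar> \<le> M" and bw: "\<And>t. \<bar>w t\<bar> \<le> M"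
    and bell: "\<And>t. w t = x t + (1 - lam) * g * y (Suc t) + lam * g * w (Suc t)"
  shows "v 0 - (\<Sum>t. g ^ t * x t) =
      g * (1 - lam) / (1 - g) * (\<Sum>t. (1 - g) * g ^ t * (y (Suc t) - v (Suc t)))
    + lam * (v 0 - w 0)
    + (1 - lam) / (1 - g) * ((\<Sum>t. (1 - g) * g ^ t * v t) - (\<Sum>t. (1 - g) * g ^ t * w t))"
proof -
  have sv: "summable (\<lambda>t. g ^ t * v t)" by (rule gsum[OF bv g])
  have sv1: "summable (\<lambda>t. g ^ t * v (Suc t))" by (rule gsum[OF bv g])
  have sw: "summable (\<lambda>t. g ^ t * w t)" by (rule gsum[OF bw g])
  have sw1: "summable (\<lambda>t. g ^ t * w (Suc t))" by (rule gsum[OF bw g])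
  have sy1: "summable (\<lambda>t. g ^ t * y (Suc t))" by (rule gsum[OF hy g])
  have sx: "summable (\<lambda>t. g ^ t * x t)" by (rule gsum[OF bx g])
  define SV where "SV = (\<Sum>t. g ^ t * v t)"
  define SV1 where "SV1 = (\<Sum>t. g ^ t * v (Suc t))"
  define SW where "SW = (\<Sum>t. g ^ t * w t)"
  define SW1 where "SW1 = (\<Sum>t. g ^ t * w (Suc t))"
  define SY1 where "SY1 = (\<Sum>t. g ^ t * y (Suc t))"
  define SX where "SX = (\<Sum>t. g ^ t * x t)"
  have F1: "SV = v 0 + g * SV1"
  proof -
    have "(\<Sum>t. g ^ Suc t * v (Suc t)) = SV - g ^ 0 * v 0"
      unfolding SV_def by (rule suminf_split_head[OF sv])
    moreover have "(\<Sum>t. g ^ Suc t * v (Suc t)) = g * SV1"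
      unfolding SV1_def using suminf_mult[OF sv1, of g] by (simp add: mult.assoc)
    ultimately show ?thesis by simp
  qed
  have F2: "SW = w 0 + g * SW1"
  proof -
    have "(\<Sum>t. g ^ Suc t * w (Suc t)) = SW - g ^ 0 * w 0"
      unfolding SW_def by (rule suminf_split_head[OF sw])
    moreover have "(\<Sum>t. g ^ Suc t * w (Suc t)) = g * SW1"
      unfolding SW1_def using suminf_mult[OF sw1, of g] by (simp add: mult.assoc)
    ultimately show ?thesis by simp
  qed
  have F3: "SW = SX + (1 - lam) * g * SY1 + lam * g * SW1"
  proof -
    have "SW = (\<Sum>t. g ^ t * x t + (1 - lam) * g * (g ^ t * y (Suc t)) + lam * g * (g ^ t * w (Suc t)))"
      unfolding SW_def by (rule suminf_cong) (subst bell, simp add: algebra_simps)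
    also have "\<dots> = SX + (1 - lam) * g * SY1 + lam * g * SW1"
    proof -
      have a2: "summable (\<lambda>t. (1 - lam) * g * (g ^ t * y (Suc t)))" by (rule summable_mult[OF sy1])
      have a3: "summable (\<lambda>t. lam * g * (g ^ t * w (Suc t)))" by (rule summable_mult[OF sw1])
      have e1: "(\<Sum>t. g ^ t * x t + (1 - lam) * g * (g ^ t * y (Suc t)) + lam * g * (g ^ t * w (Suc t)))
        = (\<Sum>t. g ^ t * x t + (1 - lam) * g * (g ^ t * y (Suc t))) + (\<Sum>t. lam * g * (g ^ t * w (Suc t)))"
        by (rule suminf_add[symmetric, OF summable_add[OF sx a2] a3])
      have e2: "(\<Sum>t. g ^ t * x t + (1 - lam) * g * (g ^ t * y (Suc t))) = SX + (\<Sum>t. (1 - lam) * g * (g ^ t * y (Suc t)))"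
        unfolding SX_def by (rule suminf_add[symmetric, OF sx a2])
      have e3: "(\<Sum>t. (1 - lam) * g * (g ^ t * y (Suc t))) = (1 - lam) * g * SY1"
        unfolding SY1_def by (rule suminf_mult[OF sy1])
      have e4: "(\<Sum>t. lam * g * (g ^ t * w (Suc t))) = lam * g * SW1"
        unfolding SW1_def by (rule suminf_mult[OF sw1])
      show ?thesis unfolding e1 e2 e3 e4 ..
    qed
    finally show ?thesis .
  qed
  have m: "(\<Sum>t. (1 - g) * g ^ t * z t) = (1 - g) * (\<Sum>t. g ^ t * z t)" if "summable (\<lambda>t. g ^ t * z t)" for z
    using suminf_mult[OF that, of "1 - g"] by (simp add: mult.assoc)
  have d: "(\<Sum>t. g ^ t * (y (Suc t) - v (Suc t))) = SY1 - SV1"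
    unfolding SY1_def SV1_def using suminf_diff[OF sy1 sv1] by (simp add: right_diff_distrib)
  have s2: "summable (\<lambda>t. g ^ t * (y (Suc t) - v (Suc t)))"
    using summable_diff[OF sy1 sv1] by (simp add: right_diff_distrib)
  have c: "a / (1 - g) * ((1 - g) * Z) = a * Z" for a Z using g by simp
  have "g * (1 - lam) / (1 - g) * (\<Sum>t. (1 - g) * g ^ t * (y (Suc t) - v (Suc t)))
    + lam * (v 0 - w 0)
    + (1 - lam) / (1 - g) * ((\<Sum>t. (1 - g) * g ^ t * v t) - (\<Sum>t. (1 - g) * g ^ t * w t))
    = g * (1 - lam) * (SY1 - SV1) + lam * (v 0 - w 0) + (1 - lam) * (SV - SW)"
    unfolding m[OF s2] m[OF sv] m[OF sw] d right_diff_distrib[symmetric, of "1 - g"] c SV_def SW_def ..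
  also have "\<dots> = v 0 - SX"
  proof -
    have "(1 - lam) * SW = SX + (1 - lam) * g * SY1 - lam * w 0" using F2 F3 by (simp add: algebra_simps)
    then show ?thesis using F1 by (simp add: algebra_simps)
  qed
  finally show ?thesis by (simp add: SX_def)
qed

theorem mainTheorem8:
  fixes S :: "'s measure" and A :: "'a measure"
    and P :: "'s \<times> 'a \<Rightarrow> 's measure" and r :: "'s \<Rightarrow> 'a \<Rightarrow> real" and g :: real
    and h :: "'s \<Rightarrow> real" and lam :: real
    and pol :: "'s \<Rightarrow> 'a measure" and d0 :: "'s measure" and V :: "'s \<Rightarrow> real"
  assumes P_kernel: "P \<in> S \<Otimes>\<^sub>M A \<rightarrow>\<^sub>M prob_algebra S"
    and r_meas: "(\<lambda>sa. r (fst sa) (snd sa)) \<in> borel_measurable (S \<Otimes>\<^sub>M A)"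
    and r_range: "\<And>s a. s \<in> space S \<Longrightarrow> a \<in> space A \<Longrightarrow> 0 \<le> r s a \<and> r s a \<le> 1"
    and g_range: "0 \<le> g" "g < 1"
    and h_meas: "h \<in> borel_measurable S"
    and h_bdd: "\<exists>B. \<forall>s\<in>space S. \<bar>h s\<bar> \<le> B"
    and lam_range: "0 \<le> lam" "lam \<le> 1"
    and pi_kernel: "pol \<in> S \<rightarrow>\<^sub>M prob_algebra A"
    and d0_prob: "d0 \<in> space (prob_algebra S)"
    and V_meas: "V \<in> borel_measurable S"
    and V_bdd: "\<exists>B. \<forall>s\<in>space S. \<bar>V s\<bar> \<le> B"
  shows "eval_dist d0 V - eval_dist d0 (disc_value S A P pol r g) =
      g * (1 - lam) / (1 - g) *
        (\<integral>sa. (\<integral>s'. h s' - V s' \<partial>(P sa)) \<partial>(sa_dist S A pol (occupancy S P pol g d0)))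
    + lam * (eval_dist d0 V
             - eval_dist d0 (disc_value S A P pol (reshaped_reward P r g lam h) (lam * g)))
    + (1 - lam) / (1 - g) *
        (eval_dist (occupancy S P pol g d0) V
         - eval_dist (occupancy S P pol g d0) (disc_value S A P pol (reshaped_reward P r g lam h) (lam * g)))"
proof -
  obtain BV where BV: "\<And>s. s \<in> space S \<Longrightarrow> \<bar>V s\<bar> \<le> BV" using V_bdd by blast
  obtain Bh where Bh: "\<And>s. s \<in> space S \<Longrightarrow> \<bar>h s\<bar> \<le> Bh" using h_bdd by blast
  have g: "0 \<le> g" "g < 1" by (rule g_range(1), rule g_range(2))
  define c where "c = lam * g"
  have c0: "0 \<le> c" unfolding c_def using g lam_range by simp
  have c1: "c \<le> g" unfolding c_def using g lam_range by (simp add: mult_left_le_one_le)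
  have cabs: "\<bar>c\<bar> < 1" using c0 c1 g by simp
  define rt where "rt = reshaped_reward P r g lam h"
  define Brt where "Brt = 1 + (1 - lam) * g * \<bar>Bh\<bar>"
  have r_bnd: "\<And>sa. sa \<in> space (S \<Otimes>\<^sub>M A) \<Longrightarrow> \<bar>r (fst sa) (snd sa)\<bar> \<le> 1"
    using r_range by (auto simp: space_pair_measure)
  have Bh': "\<And>s. s \<in> space S \<Longrightarrow> \<bar>h s\<bar> \<le> \<bar>Bh\<bar>" using Bh by fastforce
  have hP_meas: "(\<lambda>sa. \<integral>y. h y \<partial>P sa) \<in> borel_measurable (S \<Otimes>\<^sub>M A)"
    by (rule P_int_meas[OF P_kernel pi_kernel h_meas])
  have rt_eq: "(\<lambda>sa. rt (fst sa) (snd sa)) = (\<lambda>sa. r (fst sa) (snd sa) + (1 - lam) * g * (\<integral>y. h y \<partial>P sa))"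
    by (simp add: rt_def reshaped_reward_def)
  have rt_meas: "(\<lambda>sa. rt (fst sa) (snd sa)) \<in> borel_measurable (S \<Otimes>\<^sub>M A)"
    unfolding rt_eq using r_meas hP_meas by measurable
  have rt_bnd: "\<bar>rt (fst sa) (snd sa)\<bar> \<le> Brt" if sa: "sa \<in> space (S \<Otimes>\<^sub>M A)" for sa
  proof -
    have "\<bar>\<integral>y. h y \<partial>P sa\<bar> \<le> \<bar>Bh\<bar>" by (rule P_int_bnd[OF P_kernel pi_kernel h_meas Bh' sa])
    moreover have nn: "0 \<le> (1 - lam) * g" using g lam_range by simp
    moreover have "\<bar>(1 - lam) * g * (\<integral>y. h y \<partial>P sa)\<bar> = (1 - lam) * g * \<bar>\<integral>y. h y \<partial>P sa\<bar>"
      by (simp only: abs_mult[of "(1 - lam) * g"] abs_of_nonneg[OF nn])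
    ultimately have "\<bar>(1 - lam) * g * (\<integral>y. h y \<partial>P sa)\<bar> \<le> (1 - lam) * g * \<bar>Bh\<bar>"
      by (simp add: mult_left_mono)
    then show ?thesis using r_bnd[OF sa] fun_cong[OF rt_eq, of sa] unfolding Brt_def by simp
  qed
  define d where "d = state_dist P pol d0"
  have dp: "d t \<in> space (prob_algebra S)" for t unfolding d_def by (rule sd_prob[OF P_kernel pi_kernel d0_prob])
  define v where "v t = (\<integral>s. V s \<partial>d t)" for t
  define y where "y t = (\<integral>s. h s \<partial>d t)" for t
  define x where "x t = (\<integral>sa. r (fst sa) (snd sa) \<partial>sa_dist S A pol (d t))" for t
  define a where "a t = (\<integral>sa. rt (fst sa) (snd sa) \<partial>sa_dist S A pol (d t))" for t
  define Vt where "Vt = disc_value S A P pol rt c"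
  define w where "w t = (\<integral>s. Vt s \<partial>d t)" for t
  define M where "M = \<bar>BV\<bar> + \<bar>Bh\<bar> + 1 + \<bar>Brt\<bar> + \<bar>Brt / (1 - \<bar>c\<bar>)\<bar>"
  have Vt_meas: "Vt \<in> borel_measurable S" unfolding Vt_def by (rule disc_meas[OF P_kernel pi_kernel rt_meas rt_bnd cabs])
  have Vt_bnd: "\<And>s. s \<in> space S \<Longrightarrow> \<bar>Vt s\<bar> \<le> Brt / (1 - \<bar>c\<bar>)"
    unfolding Vt_def by (rule disc_bnd[OF P_kernel pi_kernel rt_meas rt_bnd cabs])
  have bv: "\<bar>v t\<bar> \<le> M" for t
    using bnd_integrable(2)[OF dp V_meas BV, of t] unfolding v_def M_def by linarith
  have hy: "\<bar>y t\<bar> \<le> M" for t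
    using bnd_integrable(2)[OF dp h_meas Bh, of t] unfolding y_def M_def by linarith
  have bx: "\<bar>x t\<bar> \<le> M" for t
    using bnd_integrable(2)[OF sa_prob[OF P_kernel pi_kernel dp] r_meas r_bnd, of t] unfolding x_def M_def by linarith
  have ba: "\<bar>a t\<bar> \<le> Brt" for t
    using bnd_integrable(2)[OF sa_prob[OF P_kernel pi_kernel dp] rt_meas rt_bnd, of t] unfolding a_def by linarith
  have bw: "\<bar>w t\<bar> \<le> M" for t
    using bnd_integrable(2)[OF dp Vt_meas Vt_bnd, of t] unfolding w_def M_def by linarith
  have step: "mdp_step P pol (d t) = d (Suc t)" for t by (simp add: d_def state_dist_def)
  have a_eq: "a t = x t + (1 - lam) * g * y (Suc t)" for t
  proof -
    have i1: "integrable (sa_dist S A pol (d t)) (\<lambda>sa. r (fst sa) (snd sa))"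
      by (rule bnd_integrable(1)[OF sa_prob[OF P_kernel pi_kernel dp] r_meas r_bnd])
    have i2: "integrable (sa_dist S A pol (d t)) (\<lambda>sa. \<integral>y. h y \<partial>P sa)"
      by (rule bnd_integrable(1)[OF sa_prob[OF P_kernel pi_kernel dp] hP_meas P_int_bnd[OF P_kernel pi_kernel h_meas Bh']])
    have "a t = (\<integral>sa. r (fst sa) (snd sa) + (1 - lam) * g * (\<integral>y. h y \<partial>P sa) \<partial>sa_dist S A pol (d t))"
      unfolding a_def using rt_eq by metis
    also have "\<dots> = x t + (1 - lam) * g * (\<integral>sa. (\<integral>y. h y \<partial>P sa) \<partial>sa_dist S A pol (d t))"
      unfolding x_def using i1 i2 by simp
    also have "(\<integral>sa. (\<integral>y. h y \<partial>P sa) \<partial>sa_dist S A pol (d t)) = y (Suc t)"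
      unfolding y_def step[symmetric] by (rule sa_P[OF P_kernel pi_kernel dp h_meas Bh])
    finally show ?thesis .
  qed
  have w_eq: "w t = (\<Sum>k. c ^ k * a (t + k))" for t
  proof -
    have "w t = (\<Sum>k. c ^ k * (\<integral>sa. rt (fst sa) (snd sa) \<partial>sa_dist S A pol (state_dist P pol (d t) k)))"
      unfolding w_def Vt_def by (rule disc_int[OF P_kernel pi_kernel rt_meas rt_bnd cabs dp])
    then show ?thesis by (simp add: a_def d_def sd_add[OF P_kernel pi_kernel])
  qed
  have bell: "w t = x t + (1 - lam) * g * y (Suc t) + lam * g * w (Suc t)" for t
  proof -
    have fa: "\<bar>c ^ k * a (t + k)\<bar> \<le> \<bar>c\<bar> ^ k * Brt" for k
      using ba[of "t + k"] by (simp add: abs_mult power_abs mult_left_mono)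
    have sf: "summable (\<lambda>k. c ^ k * a (t + k))" by (rule ser_bnd(1)[OF fa cabs])
    have "(\<Sum>k. c ^ Suc k * a (t + Suc k)) = (\<Sum>k. c ^ k * a (t + k)) - c ^ 0 * a (t + 0)"
      by (rule suminf_split_head[OF sf])
    moreover have "(\<Sum>k. c ^ Suc k * a (t + Suc k)) = c * w (Suc t)"
    proof -
      have fa2: "\<bar>c ^ k * a (Suc t + k)\<bar> \<le> \<bar>c\<bar> ^ k * Brt" for k
        using ba[of "Suc t + k"] by (simp add: abs_mult power_abs mult_left_mono)
      have "(\<Sum>k. c * (c ^ k * a (Suc t + k))) = c * (\<Sum>k. c ^ k * a (Suc t + k))"
        by (rule suminf_mult[OF ser_bnd(1)[OF fa2 cabs]])
      then show ?thesis by (simp add: w_eq[of "Suc t"] mult.assoc)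
    qed
    ultimately have "w t = a t + c * w (Suc t)" using w_eq[of t] by simp
    then show ?thesis by (simp add: a_eq c_def)
  qed
  have E1: "eval_dist d0 V = v 0" by (simp add: eval_dist_def v_def d_def state_dist_def)
  have E2: "eval_dist d0 (disc_value S A P pol r g) = (\<Sum>t. g ^ t * x t)"
  proof -
    have ga: "\<bar>g\<bar> < 1" using g by simp
    show ?thesis
      unfolding eval_dist_def x_def d_def by (rule disc_int[OF P_kernel pi_kernel r_meas r_bnd ga d0_prob])
  qed
  have E3: "eval_dist d0 (disc_value S A P pol (reshaped_reward P r g lam h) (lam * g)) = w 0"
    by (simp add: eval_dist_def w_def d_def state_dist_def Vt_def rt_def c_def)
  have E4: "eval_dist (occupancy S P pol g d0) V = (\<Sum>t. (1 - g) * g ^ t * v t)"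
    unfolding eval_dist_def v_def d_def by (rule occ_int[OF P_kernel pi_kernel g d0_prob V_meas BV])
  have E5: "eval_dist (occupancy S P pol g d0) (disc_value S A P pol (reshaped_reward P r g lam h) (lam * g))
      = (\<Sum>t. (1 - g) * g ^ t * w t)"
    unfolding eval_dist_def w_def d_def Vt_def[symmetric] rt_def[symmetric] c_def[symmetric]
    by (rule occ_int[OF P_kernel pi_kernel g d0_prob Vt_meas Vt_bnd])
  have E6: "(\<integral>sa. (\<integral>s'. h s' - V s' \<partial>(P sa)) \<partial>(sa_dist S A pol (occupancy S P pol g d0)))
      = (\<Sum>t. (1 - g) * g ^ t * (y (Suc t) - v (Suc t)))"
  proof -
    have hVm: "(\<lambda>s'. h s' - V s') \<in> borel_measurable S" using h_meas V_meas by measurable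
    have hVb: "\<bar>h s' - V s'\<bar> \<le> Bh + BV" if "s' \<in> space S" for s'
      using Bh[OF that] BV[OF that] by linarith
    have "(\<integral>sa. (\<integral>s'. h s' - V s' \<partial>(P sa)) \<partial>(sa_dist S A pol (occupancy S P pol g d0)))
      = (\<Sum>t. (1 - g) * g ^ t * (\<integral>s'. h s' - V s' \<partial>state_dist P pol d0 (Suc t)))"
      by (rule occ_P[OF P_kernel pi_kernel g d0_prob hVm hVb])
    also have "\<dots> = (\<Sum>t. (1 - g) * g ^ t * (y (Suc t) - v (Suc t)))"
    proof (rule suminf_cong)
      fix t
      have "(\<integral>s'. h s' - V s' \<partial>d (Suc t)) = y (Suc t) - v (Suc t)"
        unfolding y_def v_def
        by (rule Bochner_Integration.integral_diff[OF bnd_integrable(1)[OF dp h_meas Bh] bnd_integrable(1)[OF dp V_meas BV]])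
      then show "(1 - g) * g ^ t * (\<integral>s'. h s' - V s' \<partial>state_dist P pol d0 (Suc t)) = (1 - g) * g ^ t * (y (Suc t) - v (Suc t))"
        by (simp add: d_def)
    qed
    finally show ?thesis .
  qed
  show ?thesis
    unfolding E1 E2 E3 E4 E5 E6
    by (rule alg[where v=v and y=y and x=x and w=w and lam=lam and g=g and M=M, OF g bv hy bx bw bell])
qed

end
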